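(* Let $\alpha=\omega^{\delta_n}s_n+\dots+\omega^{\delta_1}s_1+m$ be an infinite ordinal written in Cantor normal form, where $n,s_1,\dots,s_n\in\mathbb N=\{1,2,\dots\}$, $0<\delta_1<\dots<\delta_n$ and $m\in\omega$. Then $\mathbb P(\alpha)\cong\prod_{i=1}^n(\mathbb P(\omega^{\delta_i}))^{s_i}$, $\mathrm{sm}\,\mathbb P(\alpha)\cong\prod_{i=1}^n(\mathrm{sm}\,\mathbb P(\omega^{\delta_i}))^{s_i}$ and $\mathrm{sq}\,\mathbb P(\alpha)\cong\prod_{i=1}^n(\mathrm{sq}\,\mathbb P(\omega^{\delta_i}))^{s_i}$.
   Context: For an ordinal $X$, $\mathbb P(X)=\{f[X]: f:X\to X \text{ strictly increasing}\}$, ordered by $\subset$ (the poset of copies of $X$). Products of (pre)orders are ordered coordinatewise. For a preorder $\mathbb P=\langle P,\le\rangle$: $p\perp q$ means no $r$ satisfies $r\le p,q$; the separative modification is $\mathrm{sm}(\mathbb P)=\langle P,\le^*\rangle$ with $p\le^* q$ iff $\forall r\le p\,\exists s\le r\ (s\le q)$; the separative quotient $\mathrm{sq}(\mathbb P)$ is the antisymmetric quotient of $\mathrm{sm}(\mathbb P)$ (identify $p,q$ when $p\le^*q\le^*p$). *)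

theory Defs
  imports Main "HOL-Library.FuncSet"
begin

definition strict_incr_on :: "'a rel \<Rightarrow> ('a \<Rightarrow> 'a) \<Rightarrow> bool" where
  "strict_incr_on r f \<longleftrightarrow>
     (\<forall>x\<in>Field r. f x \<in> Field r) \<and>
     (\<forall>x\<in>Field r. \<forall>y\<in>Field r. (x, y) \<in> r \<and> x \<noteq> y \<longrightarrow> (f x, f y) \<in> r \<and> f x \<noteq> f y)"

definition copies :: "'a rel \<Rightarrow> 'a set set" where
  "copies r = {f ` Field r | f. strict_incr_on r f}"

text \<open>omega^delta is the set of finitely supported functions from Field delta to nat,
  where f < g iff at the delta-largest point of difference x, f x < g x.\<close>

definition omega_exp_carrier :: "'d rel \<Rightarrow> ('d \<Rightarrow> nat) set" where
  "omega_exp_carrier d = {f. finite {x. f x \<noteq> 0} \<and> (\<forall>x. x \<notin> Field d \<longrightarrow> f x = 0)}"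

definition omega_exp_less :: "'d rel \<Rightarrow> ('d \<Rightarrow> nat) \<Rightarrow> ('d \<Rightarrow> nat) \<Rightarrow> bool" where
  "omega_exp_less d f g \<longleftrightarrow>
     (\<exists>x\<in>Field d. f x < g x \<and> (\<forall>y. (x, y) \<in> d \<and> y \<noteq> x \<longrightarrow> f y = g y))"

definition omega_exp :: "'d rel \<Rightarrow> ('d \<Rightarrow> nat) rel" where
  "omega_exp d = {(f, g). f \<in> omega_exp_carrier d \<and> g \<in> omega_exp_carrier d \<and>
                          (f = g \<or> omega_exp_less d f g)}"

text \<open>Ordinal sum of blocks: the block with key (i,j), 1 \<le> i \<le> n, 1 \<le> j \<le> s i, is a copy of
  omega^(delta i); keys are ordered with larger i first and then increasing j; the final
  m points are keys (0,j), 1 \<le> j \<le> m, each a single point.\<close>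

definition cnf_field :: "(nat \<Rightarrow> 'd rel) \<Rightarrow> (nat \<Rightarrow> nat) \<Rightarrow> nat \<Rightarrow> nat \<Rightarrow> (nat \<times> nat \<times> ('d \<Rightarrow> nat)) set" where
  "cnf_field d s n m =
     {(i, j, f). (1 \<le> i \<and> i \<le> n \<and> 1 \<le> j \<and> j \<le> s i \<and> f \<in> omega_exp_carrier (d i))
               \<or> (i = 0 \<and> 1 \<le> j \<and> j \<le> m \<and> f = (\<lambda>_. 0))}"

definition cnf_key_less :: "nat \<times> nat \<Rightarrow> nat \<times> nat \<Rightarrow> bool" where
  "cnf_key_less k k' \<longleftrightarrow> fst k > fst k' \<or> (fst k = fst k' \<and> snd k < snd k')"

definition cnf_ord :: "(nat \<Rightarrow> 'd rel) \<Rightarrow> (nat \<Rightarrow> nat) \<Rightarrow> nat \<Rightarrow> nat \<Rightarrow> (nat \<times> nat \<times> ('d \<Rightarrow> nat)) rel" where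
  "cnf_ord d s n m =
     {((i, j, f), (i', j', f')).
        (i, j, f) \<in> cnf_field d s n m \<and> (i', j', f') \<in> cnf_field d s n m \<and>
        (cnf_key_less (i, j) (i', j') \<or>
         ((i, j) = (i', j') \<and> (f, f') \<in> omega_exp (d i)))}"

definition pre_iso :: "'a set \<Rightarrow> ('a \<Rightarrow> 'a \<Rightarrow> bool) \<Rightarrow> 'b set \<Rightarrow> ('b \<Rightarrow> 'b \<Rightarrow> bool) \<Rightarrow> bool" where
  "pre_iso P le Q le' \<longleftrightarrow>
     (\<exists>h. bij_betw h P Q \<and> (\<forall>x\<in>P. \<forall>y\<in>P. le x y \<longleftrightarrow> le' (h x) (h y)))"

definition prod_carrier :: "'k set \<Rightarrow> ('k \<Rightarrow> 'a set) \<Rightarrow> ('k \<Rightarrow> 'a) set" where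
  "prod_carrier J P = PiE J P"

definition prod_le :: "'k set \<Rightarrow> ('k \<Rightarrow> 'a \<Rightarrow> 'a \<Rightarrow> bool) \<Rightarrow> ('k \<Rightarrow> 'a) \<Rightarrow> ('k \<Rightarrow> 'a) \<Rightarrow> bool" where
  "prod_le J le x y \<longleftrightarrow> (\<forall>k\<in>J. le k (x k) (y k))"

definition sm_le :: "'a set \<Rightarrow> ('a \<Rightarrow> 'a \<Rightarrow> bool) \<Rightarrow> 'a \<Rightarrow> 'a \<Rightarrow> bool" where
  "sm_le P le p q \<longleftrightarrow> (\<forall>r\<in>P. le r p \<longrightarrow> (\<exists>s\<in>P. le s r \<and> le s q))"

definition sq_class :: "'a set \<Rightarrow> ('a \<Rightarrow> 'a \<Rightarrow> bool) \<Rightarrow> 'a \<Rightarrow> 'a set" where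
  "sq_class P le p = {q\<in>P. sm_le P le p q \<and> sm_le P le q p}"

definition sq_carrier :: "'a set \<Rightarrow> ('a \<Rightarrow> 'a \<Rightarrow> bool) \<Rightarrow> 'a set set" where
  "sq_carrier P le = sq_class P le ` P"

definition sq_le :: "'a set \<Rightarrow> ('a \<Rightarrow> 'a \<Rightarrow> bool) \<Rightarrow> 'a set \<Rightarrow> 'a set \<Rightarrow> bool" where
  "sq_le P le A B \<longleftrightarrow> (\<exists>p\<in>A. \<exists>q\<in>B. sm_le P le p q)"

text \<open>Index set of the product \<Prod>_{i=1}^n (\<dots>)^{s_i}.\<close>

definition cnf_index :: "(nat \<Rightarrow> nat) \<Rightarrow> nat \<Rightarrow> (nat \<times> nat) set" where
  "cnf_index s n = {(i, j). 1 \<le> i \<and> i \<le> n \<and> 1 \<le> j \<and> j \<le> s i}"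

end

theory Submission
  imports Defs
begin


lemma wo_facts:
  assumes "Well_order W"
  shows "\<And>x. x \<in> Field W \<Longrightarrow> (x,x) \<in> W"
    and "\<And>x y. x \<in> Field W \<Longrightarrow> y \<in> Field W \<Longrightarrow> x \<noteq> y \<Longrightarrow> (x,y) \<in> W \<or> (y,x) \<in> W"
    and "\<And>x y. (x,y) \<in> W \<Longrightarrow> (y,x) \<in> W \<Longrightarrow> x = y"
    and "\<And>x y z. (x,y) \<in> W \<Longrightarrow> (y,z) \<in> W \<Longrightarrow> (x,z) \<in> W"
    and "wf (W - Id)"
  using assms unfolding well_order_on_def linear_order_on_def partial_order_on_def
    preorder_on_def total_on_def antisym_def refl_on_def trans_def
  by blast+

lemma wo_ge:
  assumes W: "Well_order W" and A: "A \<subseteq> Field W" and fA: "\<forall>x\<in>A. f x \<in> A"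
   and mono: "\<forall>x\<in>A. \<forall>y\<in>A. (x,y) \<in> W \<and> x \<noteq> y \<longrightarrow> (f x, f y) \<in> W \<and> f x \<noteq> f y"
  shows "x \<in> A \<Longrightarrow> (x, f x) \<in> W"
proof (induction x rule: wf_induct[OF wo_facts(5)[OF W]])
  case (1 x)
  show ?case
  proof (rule ccontr)
    assume nx: "(x, f x) \<notin> W"
    have fx: "f x \<in> A" using fA 1(2) by blast
    have ne: "f x \<noteq> x" using nx wo_facts(1)[OF W] A 1(2) by auto
    have lt: "(f x, x) \<in> W" using nx wo_facts(2)[OF W, of x "f x"] A 1(2) fx ne by auto
    have "(f x, f (f x)) \<in> W" using 1(1) lt ne fx by auto
    moreover have "(f (f x), f x) \<in> W \<and> f (f x) \<noteq> f x" using mono fx 1(2) lt ne by blast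
    ultimately show False using wo_facts(3)[OF W] by blast
  qed
qed

lemma fin_max:
  assumes W: "Well_order d"
  shows "finite S \<Longrightarrow> S \<noteq> {} \<Longrightarrow> S \<subseteq> Field d \<Longrightarrow> \<exists>x\<in>S. \<forall>y\<in>S. (y,x) \<in> d"
proof (induction S rule: finite_ne_induct)
  case (singleton x)
  then show ?case using wo_facts(1)[OF W] by auto
next
  case (insert x F)
  then obtain z where z: "z \<in> F" "\<forall>y\<in>F. (y,z) \<in> d" by auto
  show ?case
  proof (cases "(x,z) \<in> d")
    case True then show ?thesis using z by auto
  next
    case False
    then have "(z,x) \<in> d" using wo_facts(2)[OF W, of x z] wo_facts(1)[OF W] insert z by auto
    then show ?thesis using z wo_facts(4)[OF W] wo_facts(1)[OF W] insert by blast
  qed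
qed

lemma OE_Field: "Field (omega_exp d) = omega_exp_carrier d"
  unfolding omega_exp_def Field_def by auto

lemma OE_zero: "(\<lambda>_. 0) \<in> omega_exp_carrier d"
  unfolding omega_exp_carrier_def by auto

lemma OE_add_carrier: "u \<in> omega_exp_carrier d \<Longrightarrow> w \<in> omega_exp_carrier d \<Longrightarrow> (\<lambda>z. u z + w z) \<in> omega_exp_carrier d"
  unfolding omega_exp_carrier_def
proof safe
  assume "finite {x. u x \<noteq> 0}" "finite {x. w x \<noteq> 0}"
  then have "finite ({x. u x \<noteq> 0} \<union> {x. w x \<noteq> 0})" by auto
  then show "finite {x. u x + w x \<noteq> 0}" by (rule finite_subset[rotated]) auto
qed auto

lemma OE_add_mono: "omega_exp_less d w w' \<Longrightarrow> omega_exp_less d (\<lambda>z. u z + w z) (\<lambda>z. u z + w' z)"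
  unfolding omega_exp_less_def by auto

lemma OE_add_ge:
  assumes W: "Well_order d" and w: "w \<in> omega_exp_carrier d"
  shows "(\<lambda>z. u z + w z) = u \<or> omega_exp_less d u (\<lambda>z. u z + w z)"
proof (cases "{x. w x \<noteq> 0} = {}")
  case True then show ?thesis by auto
next
  case False
  have "finite {x. w x \<noteq> 0}" "{x. w x \<noteq> 0} \<subseteq> Field d" using w unfolding omega_exp_carrier_def by auto
  then obtain x where x: "w x \<noteq> 0" "\<forall>y. w y \<noteq> 0 \<longrightarrow> (y,x) \<in> d"
    using fin_max[OF W _ False] by auto
  have xF: "x \<in> Field d" using w x(1) unfolding omega_exp_carrier_def by auto
  have "\<forall>y. (x, y) \<in> d \<and> y \<noteq> x \<longrightarrow> w y = 0" using x(2) wo_facts(3)[OF W] by blast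
  then show ?thesis unfolding omega_exp_less_def using x(1) xF by auto
qed

definition oe_map :: "'d rel \<Rightarrow> ('d \<Rightarrow> 'e) \<Rightarrow> ('d \<Rightarrow> nat) \<Rightarrow> ('e \<Rightarrow> nat)" where
  "oe_map d' h w = (\<lambda>z. if z \<in> h ` Field d' then w (inv_into (Field d') h z) else 0)"

lemma OE_map:
  assumes W': "Well_order d'" and W: "Well_order d" and E: "embed d' d h"
  shows "w \<in> omega_exp_carrier d' \<Longrightarrow> oe_map d' h w \<in> omega_exp_carrier d"
    and "omega_exp_less d' w w' \<Longrightarrow> omega_exp_less d (oe_map d' h w) (oe_map d' h w')"
proof -
  have inj: "inj_on h (Field d')" by (rule embed_inj_on[OF W' E])
  have comp: "\<And>a b. (a,b) \<in> d' \<Longrightarrow> (h a, h b) \<in> d" using embed_compat[OF E] unfolding compat_def by blast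
  have hF: "h ` Field d' \<subseteq> Field d" by (rule embed_Field[OF E])
  {
    assume w: "w \<in> omega_exp_carrier d'"
    have "{z. oe_map d' h w z \<noteq> 0} \<subseteq> h ` {x. w x \<noteq> 0}"
      unfolding oe_map_def using inj by (auto simp: image_iff)
    moreover have "finite (h ` {x. w x \<noteq> 0})" using w unfolding omega_exp_carrier_def by auto
    ultimately have "finite {z. oe_map d' h w z \<noteq> 0}" by (rule finite_subset)
    moreover have "\<forall>z. z \<notin> Field d \<longrightarrow> oe_map d' h w z = 0" unfolding oe_map_def using hF by auto
    ultimately show "oe_map d' h w \<in> omega_exp_carrier d" unfolding omega_exp_carrier_def by auto
  }
  assume "omega_exp_less d' w w'"
  then obtain x where x: "x \<in> Field d'" "w x < w' x" "\<forall>y. (x, y) \<in> d' \<and> y \<noteq> x \<longrightarrow> w y = w' y"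
    unfolding omega_exp_less_def by auto
  have 1: "oe_map d' h w (h x) < oe_map d' h w' (h x)" unfolding oe_map_def using x inj by auto
  have 2: "oe_map d' h w y = oe_map d' h w' y" if "(h x, y) \<in> d" "y \<noteq> h x" for y
  proof (cases "y \<in> h ` Field d'")
    case True
    then obtain a where a: "a \<in> Field d'" "y = h a" by auto
    have "a \<noteq> x" using a that by auto
    have "(x, a) \<in> d'"
    proof (rule ccontr)
      assume "(x,a) \<notin> d'"
      then have "(a,x) \<in> d'" using wo_facts(2)[OF W' x(1) a(1)] \<open>a \<noteq> x\<close> by auto
      then have "(h a, h x) \<in> d" by (rule comp)
      then show False using that a wo_facts(3)[OF W] by auto
    qed
    then show ?thesis unfolding oe_map_def using x(3) \<open>a \<noteq> x\<close> a inj by auto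
  next
    case False then show ?thesis unfolding oe_map_def by auto
  qed
  show "omega_exp_less d (oe_map d' h w) (oe_map d' h w')"
    unfolding omega_exp_less_def using 1 2 hF x(1) by blast
qed




locale cnf =
  fixes d :: "nat \<Rightarrow> 'd rel" and s :: "nat \<Rightarrow> nat" and n m :: nat
  assumes d_wo: "\<And>i. 1 \<le> i \<Longrightarrow> i \<le> n \<Longrightarrow> Well_order (d i)"
    and s_pos: "\<And>i. 1 \<le> i \<Longrightarrow> i \<le> n \<Longrightarrow> 1 \<le> s i"
    and d_incr: "\<And>i. 1 \<le> i \<Longrightarrow> i < n \<Longrightarrow> (d i, d (Suc i)) \<in> ordLess"
    and W_wo: "Well_order (cnf_ord d s n m)"
begin

abbreviation "W \<equiv> cnf_ord d s n m"
abbreviation "F \<equiv> cnf_field d s n m"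

lemma W_def': "((i,j,u),(i',j',v)) \<in> W \<longleftrightarrow> (i,j,u) \<in> F \<and> (i',j',v) \<in> F \<and>
   (cnf_key_less (i,j) (i',j') \<or> ((i,j) = (i',j') \<and> (u,v) \<in> omega_exp (d i)))"
  unfolding cnf_ord_def by auto

lemma F_iff: "(i,j,u) \<in> F \<longleftrightarrow> (1 \<le> i \<and> i \<le> n \<and> 1 \<le> j \<and> j \<le> s i \<and> u \<in> omega_exp_carrier (d i))
               \<or> (i = 0 \<and> 1 \<le> j \<and> j \<le> m \<and> u = (\<lambda>_. 0))"
  unfolding cnf_field_def by auto

lemma FW: "Field W = F"
proof
  show "Field W \<subseteq> F" unfolding cnf_ord_def Field_def by auto
next
  show "F \<subseteq> Field W"
  proof
    fix t assume t: "t \<in> F"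
    obtain i j u where tt: "t = (i,j,u)" by (cases t) auto
    have "u \<in> omega_exp_carrier (d i)" using t OE_zero unfolding tt F_iff by auto
    then have "(t,t) \<in> W" using t unfolding tt W_def' omega_exp_def by auto
    then show "t \<in> Field W" by (auto simp: Field_def)
  qed
qed

lemma W_same:
  assumes "(i,j,a) \<in> F" "(i,j,b) \<in> F"
  shows "((i,j,a),(i,j,b)) \<in> W \<longleftrightarrow> a = b \<or> omega_exp_less (d i) a b"
proof -
  have "a \<in> omega_exp_carrier (d i)" "b \<in> omega_exp_carrier (d i)" using assms OE_zero unfolding F_iff by auto
  then show ?thesis using assms unfolding W_def' omega_exp_def cnf_key_less_def by auto
qed

lemma oel_irrefl[simp]: "\<not> omega_exp_less e a a"
  unfolding omega_exp_less_def by auto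

lemma key_lt:
  assumes "(i,j,a) \<in> F" "(i',j',b) \<in> F" "cnf_key_less (i,j) (i',j')"
  shows "((i,j,a),(i',j',b)) \<in> W" "(i,j,a) \<noteq> (i',j',b)"
  using assms unfolding W_def' cnf_key_less_def by auto

lemma W_key:
  assumes "((i,j,a),(i',j',b)) \<in> W"
  shows "cnf_key_less (i,j) (i',j') \<or> (i,j) = (i',j')"
  using assms unfolding W_def' by auto

lemma key_asym: "cnf_key_less k k' \<Longrightarrow> \<not> cnf_key_less k' k" "\<not> cnf_key_less k k"
  unfolding cnf_key_less_def by auto

definition Cb :: nat where "Cb = Suc (m + sum s {1..n})"
definition rk :: "nat \<Rightarrow> nat \<Rightarrow> nat" where "rk i j = i * Cb + (Cb - j)"

lemma s_le_C: "1 \<le> i \<Longrightarrow> i \<le> n \<Longrightarrow> s i < Cb"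
proof -
  assume "1 \<le> i" "i \<le> n"
  then have "s i \<le> sum s {1..n}" by (intro member_le_sum) auto
  then show ?thesis unfolding Cb_def by auto
qed

lemma oe_embed:
  assumes "1 \<le> i'" "i' \<le> i" "i \<le> n" "i' = i \<or> i' = i - 1"
  shows "\<exists>\<phi>. (\<forall>w \<in> omega_exp_carrier (d i'). \<phi> w \<in> omega_exp_carrier (d i)) \<and>
    (\<forall>w w'. omega_exp_less (d i') w w' \<longrightarrow> omega_exp_less (d i) (\<phi> w) (\<phi> w'))"
proof (cases "i' = i")
  case True then show ?thesis by (intro exI[of _ id]) auto
next
  case False
  then have ii: "i = Suc i'" "i' < n" using assms by auto
  then have "(d i', d i) \<in> ordLeq" using d_incr[of i'] assms ordLess_imp_ordLeq by auto
  then obtain h where h: "embed (d i') (d i) h" unfolding ordLeq_def by auto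
  have w1: "Well_order (d i')" "Well_order (d i)" using d_wo assms ii by auto
  show ?thesis using OE_map[OF w1 h] by blast
qed

end



context cnf begin

lemma strict_facts:
  assumes f: "strict_incr_on W f"
  shows "\<And>x. x \<in> F \<Longrightarrow> f x \<in> F"
    and "\<And>x y. x \<in> F \<Longrightarrow> y \<in> F \<Longrightarrow> (x,y) \<in> W \<Longrightarrow> x \<noteq> y \<Longrightarrow> (f x, f y) \<in> W \<and> f x \<noteq> f y"
    and "\<And>x. x \<in> F \<Longrightarrow> (x, f x) \<in> W"
proof -
  show 1: "\<And>x. x \<in> F \<Longrightarrow> f x \<in> F" using f unfolding strict_incr_on_def FW by auto
  show 2: "\<And>x y. x \<in> F \<Longrightarrow> y \<in> F \<Longrightarrow> (x,y) \<in> W \<Longrightarrow> x \<noteq> y \<Longrightarrow> (f x, f y) \<in> W \<and> f x \<noteq> f y"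
    using f unfolding strict_incr_on_def FW by auto
  show "\<And>x. x \<in> F \<Longrightarrow> (x, f x) \<in> W"
    by (rule wo_ge[OF W_wo, of F f]) (use 1 2 FW in auto)
qed

lemma block_pres:
  assumes f: "strict_incr_on W f"
  shows "x \<in> F \<Longrightarrow> fst (f x) = fst x \<and> fst (snd (f x)) = fst (snd x)"
proof (rule ccontr)
  note fF = strict_facts(1)[OF f] and fm = strict_facts(2)[OF f] and fge = strict_facts(3)[OF f]
  let ?bad = "\<lambda>x. x \<in> F \<and> \<not> (fst (f x) = fst x \<and> fst (snd (f x)) = fst (snd x))"
  assume "x \<in> F" "\<not> (fst (f x) = fst x \<and> fst (snd (f x)) = fst (snd x))"
  then have "?bad x" by auto
  then obtain x0 where x0: "?bad x0" and mn: "\<And>y. ?bad y \<Longrightarrow> rk (fst x0) (fst (snd x0)) \<le> rk (fst y) (fst (snd y))"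
    using ex_has_least_nat[of ?bad x "\<lambda>x. rk (fst x) (fst (snd x))"] by blast
  obtain i j u where xx: "x0 = (i,j,u)" by (cases x0) auto
  obtain i' j' v where fx: "f x0 = (i',j',v)" by (cases "f x0") auto
  have xF: "(i,j,u) \<in> F" using x0 xx by auto
  have fxF: "(i',j',v) \<in> F" using fF[of x0] x0 fx by auto
  have "((i,j,u),(i',j',v)) \<in> W" using fge[of x0] x0 xx fx by auto
  then have kl: "cnf_key_less (i,j) (i',j')" using W_key x0 xx fx by fastforce
  define i2 where "i2 = (if 1 \<le> i \<and> j < s i then i else if 2 \<le> i then i - 1 else 0)"
  define j2 where "j2 = (if 1 \<le> i \<and> j < s i then j+1 else if 2 \<le> i then 1 else if i = 0 then j+1 else 1)"
  define y where "y = (i2, j2, (\<lambda>_::'d. 0::nat))"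
  have yy: "y = (i2, j2, (\<lambda>_. 0))" unfolding y_def i2_def j2_def by simp
  have yF: "y \<in> F"
    using xF fxF kl s_pos[of "i-1"] OE_zero unfolding y_def i2_def j2_def F_iff cnf_key_less_def by auto
  have kxy: "cnf_key_less (i,j) (i2,j2)"
    using xF yy unfolding y_def i2_def j2_def F_iff cnf_key_less_def by (auto split: if_splits)
  have succ: "\<And>a b c. (a,b,c) \<in> F \<Longrightarrow> cnf_key_less (i,j) (a,b) \<Longrightarrow> (a,b) = (i2,j2) \<or> cnf_key_less (i2,j2) (a,b)"
    using xF yy unfolding y_def i2_def j2_def F_iff cnf_key_less_def by (auto split: if_splits)
  have mC: "m < Cb" unfolding Cb_def by auto
  have rky: "rk i2 j2 < rk i j"
  proof (cases "1 \<le> i \<and> j < s i")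
    case True
    then show ?thesis using s_le_C[of i] xF unfolding i2_def j2_def rk_def F_iff by auto
  next
    case F1: False
    show ?thesis
    proof (cases "2 \<le> i")
      case True
      then have "j = s i" "s i < Cb" using F1 xF s_le_C[of i] unfolding F_iff by auto
      moreover have "i * Cb = (i - 1) * Cb + Cb" using True by (cases i) auto
      ultimately show ?thesis using F1 True unfolding i2_def j2_def rk_def by auto
    next
      case False
      then consider "i = 0" | "i = 1" by linarith
      then show ?thesis
      proof cases
        case 1
        then have "j \<le> m" using xF unfolding F_iff by auto
        then show ?thesis using 1 mC unfolding i2_def j2_def rk_def by auto
      next
        case 2
        then have "s 1 < Cb" "j = s 1" "1 \<le> s 1" using F1 xF s_le_C[of 1] unfolding F_iff by auto
        then show ?thesis using 2 unfolding i2_def j2_def rk_def by auto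
      qed
    qed
  qed
  have goody: "fst (f y) = i2 \<and> fst (snd (f y)) = j2"
    using mn[of y] yF rky xx yy by force
  obtain b where fy: "f y = (i2, j2, b)" using goody by (cases "f y") auto
  have fyF: "(i2,j2,b) \<in> F" using fF[OF yF] fy by auto
  have "(f x0, f y) \<in> W \<and> f x0 \<noteq> f y" using fm[of x0 y] key_lt[of i j u i2 j2 "\<lambda>_. 0"] xF yF xx yy kxy by auto
  then have fxy: "((i',j',v),(i2,j2,b)) \<in> W" "(i',j',v) \<noteq> (i2,j2,b)" using fx fy by auto
  have "(i',j') = (i2,j2)"
    using succ[OF fxF kl] W_key[OF fxy(1)] key_asym by blast
  then have ii: "i' = i2" "j' = j2" by auto
  show False
  proof (cases "i2 = 0")
    case True
    then show False using fxF fyF fxy(2) ii unfolding F_iff by auto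
  next
    case False
    have y2: "1 \<le> i2" "i2 \<le> n" "1 \<le> j2" "j2 \<le> s i2" using yF False unfolding yy F_iff by auto
    have ix: "1 \<le> i" "i2 \<le> i" "i2 = i \<or> i2 = i - 1" using False unfolding i2_def by (auto split: if_splits)
    have x2: "i \<le> n" "1 \<le> j" "j \<le> s i" "u \<in> omega_exp_carrier (d i)" using xF ix unfolding F_iff by auto
    have wdi: "Well_order (d i)" using d_wo x2 ix by auto
    obtain \<phi> where phi1: "\<And>w. w \<in> omega_exp_carrier (d i2) \<Longrightarrow> \<phi> w \<in> omega_exp_carrier (d i)"
      and phi2: "\<And>w w'. omega_exp_less (d i2) w w' \<Longrightarrow> omega_exp_less (d i) (\<phi> w) (\<phi> w')"
      using oe_embed[of i2 i] y2 ix x2 by blast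
    have bC: "b \<in> omega_exp_carrier (d i2)" using fyF y2 unfolding F_iff by auto
    define z where "z = (\<lambda>w. (i, j, (\<lambda>t. u t + w t)))"
    have zF: "\<And>w. w \<in> omega_exp_carrier (d i) \<Longrightarrow> z w \<in> F"
      unfolding z_def F_iff using x2 ix OE_add_carrier by auto
    have xz: "\<And>w. w \<in> omega_exp_carrier (d i) \<Longrightarrow> (x0, z w) \<in> W"
    proof -
      fix w assume w: "w \<in> omega_exp_carrier (d i)"
      have "(\<lambda>t. u t + w t) = u \<or> omega_exp_less (d i) u (\<lambda>t. u t + w t)" by (rule OE_add_ge[OF wdi w])
      then show "(x0, z w) \<in> W" using W_same[of i j u "\<lambda>t. u t + w t"] zF[OF w] xF unfolding xx z_def by auto
    qed
    have zy: "\<And>w. w \<in> omega_exp_carrier (d i) \<Longrightarrow> (z w, y) \<in> W \<and> z w \<noteq> y"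
      using key_lt[of i j _ i2 j2] zF yF kxy unfolding z_def yy by auto
    have fxF0: "f x0 \<in> Field W" using fF[of x0] x0 FW by auto
    have fz: "\<exists>c. f (z w) = (i2, j2, c) \<and> c \<in> omega_exp_carrier (d i2) \<and> omega_exp_less (d i2) c b"
      if w: "w \<in> omega_exp_carrier (d i)" for w
    proof -
      have "(f x0, f (z w)) \<in> W"
      proof (cases "x0 = z w")
        case True then show ?thesis using wo_facts(1)[OF W_wo] fxF0 by auto
      next
        case False then show ?thesis using fm[of x0 "z w"] x0 zF[OF w] xz[OF w] by auto
      qed
      moreover have "(f (z w), f y) \<in> W \<and> f (z w) \<noteq> f y" using fm[of "z w" y] zF[OF w] yF zy[OF w] by auto
      moreover obtain a1 a2 c where fzw: "f (z w) = (a1,a2,c)" by (cases "f (z w)") auto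
      ultimately have 1: "((i2,j2,v),(a1,a2,c)) \<in> W" "((a1,a2,c),(i2,j2,b)) \<in> W" "(a1,a2,c) \<noteq> (i2,j2,b)"
        using fx fy ii by auto
      have "(a1,a2) = (i2,j2)" using W_key[OF 1(1)] W_key[OF 1(2)] key_asym by blast
      then have aa: "a1 = i2" "a2 = j2" by auto
      have cF: "(i2,j2,c) \<in> F" using fF[OF zF[OF w]] fzw aa by auto
      have "omega_exp_less (d i2) c b" using W_same[OF cF fyF] 1(2,3) aa by auto
      then show ?thesis using fzw aa cF y2 unfolding F_iff by auto
    qed
    define g where "g = (\<lambda>w. \<phi> (snd (snd (f (z w)))))"
    have gC: "\<And>w. w \<in> omega_exp_carrier (d i) \<Longrightarrow> g w \<in> omega_exp_carrier (d i)"
      unfolding g_def using fz phi1 by fastforce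
    have gm: "omega_exp_less (d i) (g w) (g w')"
      if w: "w \<in> omega_exp_carrier (d i)" "w' \<in> omega_exp_carrier (d i)" "omega_exp_less (d i) w w'" for w w'
    proof -
      have "omega_exp_less (d i) (\<lambda>t. u t + w t) (\<lambda>t. u t + w' t)" by (rule OE_add_mono[OF w(3)])
      then have "(z w, z w') \<in> W" "z w \<noteq> z w'"
        using W_same[of i j "\<lambda>t. u t + w t" "\<lambda>t. u t + w' t"] zF[OF w(1)] zF[OF w(2)] oel_irrefl
        unfolding z_def by auto
      then have 1: "(f (z w), f (z w')) \<in> W" "f (z w) \<noteq> f (z w')" using fm zF w by auto
      obtain c where c: "f (z w) = (i2, j2, c)" using fz[OF w(1)] by auto
      obtain c' where c': "f (z w') = (i2, j2, c')" using fz[OF w(2)] by auto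
      have "(i2,j2,c) \<in> F" "(i2,j2,c') \<in> F" using fF zF w c c' by metis+
      then have "omega_exp_less (d i2) c c'" using W_same 1 c c' by auto
      then show ?thesis unfolding g_def using c c' phi2 by auto
    qed
    define cc where "cc = \<phi> b"
    have ccC: "cc \<in> omega_exp_carrier (d i)" unfolding cc_def using phi1 bC by auto
    have gcc: "omega_exp_less (d i) (g cc) cc"
      unfolding g_def cc_def using fz[OF ccC] phi2 cc_def by auto
    define A where "A = {t. \<exists>w \<in> omega_exp_carrier (d i). t = (i,j,w)}"
    define G where "G = (\<lambda>t::nat \<times> nat \<times> ('d \<Rightarrow> nat). (i, j, g (snd (snd t))))"
    have AF: "A \<subseteq> Field W" unfolding A_def FW using x2 ix by (auto simp: F_iff)
    have GA: "\<forall>t\<in>A. G t \<in> A" unfolding A_def G_def using gC by auto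
    have Gm: "\<forall>t\<in>A. \<forall>t'\<in>A. (t,t') \<in> W \<and> t \<noteq> t' \<longrightarrow> (G t, G t') \<in> W \<and> G t \<noteq> G t'"
    proof (intro ballI impI)
      fix t t' assume tA: "t \<in> A" "t' \<in> A" and tt: "(t,t') \<in> W \<and> t \<noteq> t'"
      obtain w w' where w: "w \<in> omega_exp_carrier (d i)" "w' \<in> omega_exp_carrier (d i)" "t = (i,j,w)" "t' = (i,j,w')"
        using tA unfolding A_def by auto
      have F2: "(i,j,w) \<in> F" "(i,j,w') \<in> F" using AF tA w FW by auto
      have "omega_exp_less (d i) w w'" using W_same[OF F2] tt w by auto
      then have "omega_exp_less (d i) (g w) (g w')" using gm w by auto
      moreover have "(i,j,g w) \<in> F" "(i,j,g w') \<in> F" using x2 ix gC w by (auto simp: F_iff)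
      ultimately show "(G t, G t') \<in> W \<and> G t \<noteq> G t'"
        using W_same oel_irrefl unfolding G_def w by fastforce
    qed
    have ccA: "(i,j,cc) \<in> A" unfolding A_def using ccC by auto
    have 1: "((i,j,cc), G (i,j,cc)) \<in> W" by (rule wo_ge[OF W_wo AF GA Gm ccA])
    have F3: "(i,j,cc) \<in> F" "(i,j,g cc) \<in> F" using AF ccA GA FW unfolding G_def by auto
    have 2: "((i,j,g cc), (i,j,cc)) \<in> W" using W_same[OF F3(2,1)] gcc by auto
    have "(i,j,cc) = (i,j,g cc)" using wo_facts(3)[OF W_wo] 1 2 unfolding G_def by auto
    then show False using gcc oel_irrefl by auto
  qed
qed

end



lemma oe_pair: "(a,b) \<in> omega_exp e \<longleftrightarrow> a \<in> omega_exp_carrier e \<and> b \<in> omega_exp_carrier e \<and> (a = b \<or> omega_exp_less e a b)"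
  unfolding omega_exp_def by auto

lemma J_iff: "(i,j) \<in> cnf_index s n \<longleftrightarrow> 1 \<le> i \<and> i \<le> n \<and> 1 \<le> j \<and> j \<le> s i"
  unfolding cnf_index_def by auto

context cnf begin

abbreviation "J \<equiv> cnf_index s n"
definition Theta :: "(nat \<times> nat \<times> ('d \<Rightarrow> nat)) set \<Rightarrow> nat \<times> nat \<Rightarrow> ('d \<Rightarrow> nat) set" where
  "Theta C = (\<lambda>k\<in>J. {w. (fst k, snd k, w) \<in> C})"

lemma copy_facts:
  assumes C: "C \<in> copies W"
  shows "C \<subseteq> F"
    and "\<And>j. 1 \<le> j \<Longrightarrow> j \<le> m \<Longrightarrow> (0, j, (\<lambda>_. 0)) \<in> C"
    and "\<And>i j. (i,j) \<in> J \<Longrightarrow> {w. (i,j,w) \<in> C} \<in> copies (omega_exp (d i))"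
proof -
  obtain f where f: "strict_incr_on W f" and Cf: "C = f ` F" using C unfolding copies_def FW by auto
  note fF = strict_facts(1)[OF f] and fm = strict_facts(2)[OF f] and bp = block_pres[OF f]
  show "C \<subseteq> F" using fF Cf by auto
  show "\<And>j. 1 \<le> j \<Longrightarrow> j \<le> m \<Longrightarrow> (0, j, (\<lambda>_. 0)) \<in> C"
  proof -
    fix j assume j: "1 \<le> j" "j \<le> m"
    have t: "(0::nat, j, (\<lambda>_::'d. 0::nat)) \<in> F" using j by (auto simp: F_iff)
    obtain a b c where fa: "f (0, j, (\<lambda>_. 0)) = (a,b,c)" by (cases "f (0, j, (\<lambda>_. 0))") auto
    have "a = 0" "b = j" using bp[OF t] fa by auto
    then have "f (0, j, (\<lambda>_. 0)) = (0, j, (\<lambda>_. 0))" using fF[OF t] fa by (auto simp: F_iff)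
    then show "(0, j, (\<lambda>_. 0)) \<in> C" using Cf t by force
  qed
  show "\<And>i j. (i,j) \<in> J \<Longrightarrow> {w. (i,j,w) \<in> C} \<in> copies (omega_exp (d i))"
  proof -
    fix i j assume ij: "(i,j) \<in> J"
    define g where "g = (\<lambda>w. snd (snd (f (i,j,w))))"
    have inF: "\<And>w. (i,j,w) \<in> F \<longleftrightarrow> w \<in> omega_exp_carrier (d i)" using ij by (auto simp: F_iff J_iff)
    have fg: "\<And>w. w \<in> omega_exp_carrier (d i) \<Longrightarrow> f (i,j,w) = (i,j,g w) \<and> g w \<in> omega_exp_carrier (d i)"
    proof -
      fix w assume w: "w \<in> omega_exp_carrier (d i)"
      obtain a b c where fa: "f (i,j,w) = (a,b,c)" by (cases "f (i,j,w)") auto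
      have "a = i" "b = j" using bp[of "(i,j,w)"] inF w fa by auto
      then show "f (i,j,w) = (i,j,g w) \<and> g w \<in> omega_exp_carrier (d i)"
        using fa fF[of "(i,j,w)"] inF w unfolding g_def by auto
    qed
    have si: "strict_incr_on (omega_exp (d i)) g"
      unfolding strict_incr_on_def OE_Field
    proof (intro conjI ballI impI)
      fix w assume "w \<in> omega_exp_carrier (d i)" then show "g w \<in> omega_exp_carrier (d i)" using fg by auto
    next
      fix w w' assume w: "w \<in> omega_exp_carrier (d i)" "w' \<in> omega_exp_carrier (d i)"
        and ww: "(w, w') \<in> omega_exp (d i) \<and> w \<noteq> w'"
      have "((i,j,w),(i,j,w')) \<in> W" using W_same[of i j w w'] inF w ww by (auto simp: oe_pair)
      then have "(f (i,j,w), f (i,j,w')) \<in> W \<and> f (i,j,w) \<noteq> f (i,j,w')" using fm inF w ww by auto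
      then have "((i,j,g w),(i,j,g w')) \<in> W \<and> g w \<noteq> g w'" using fg w by auto
      then show "(g w, g w') \<in> omega_exp (d i)"  "g w \<noteq> g w'"
        using W_same[of i j "g w" "g w'"] inF fg w by (auto simp: oe_pair)
    qed
    have "{w. (i,j,w) \<in> C} = g ` omega_exp_carrier (d i)"
    proof
      show "g ` omega_exp_carrier (d i) \<subseteq> {w. (i,j,w) \<in> C}" using fg inF Cf by force
    next
      show "{w. (i,j,w) \<in> C} \<subseteq> g ` omega_exp_carrier (d i)"
      proof
        fix w assume "w \<in> {w. (i,j,w) \<in> C}"
        then obtain t where t: "t \<in> F" "f t = (i,j,w)" using Cf by auto
        obtain a b c where tt: "t = (a,b,c)" by (cases t) auto
        have "a = i" "b = j" using bp[OF t(1)] t(2) tt by auto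
        then have "c \<in> omega_exp_carrier (d i)" "w = g c" using t tt inF fg by auto
        then show "w \<in> g ` omega_exp_carrier (d i)" by auto
      qed
    qed
    then show "{w. (i,j,w) \<in> C} \<in> copies (omega_exp (d i))" using si unfolding copies_def OE_Field by auto
  qed
qed

lemma copy_refl:
  assumes C: "C \<in> copies W" and C': "C' \<in> copies W"
    and sub: "\<forall>i j. (i,j) \<in> J \<longrightarrow> {w. (i,j,w) \<in> C} \<subseteq> {w. (i,j,w) \<in> C'}"
  shows "C \<subseteq> C'"
proof
  fix t assume t: "t \<in> C"
  obtain i j w where tt: "t = (i,j,w)" by (cases t) auto
  have "t \<in> F" using copy_facts(1)[OF C] t by auto
  then consider "(i,j) \<in> J" | "i = 0" "1 \<le> j" "j \<le> m" "w = (\<lambda>_. 0)" unfolding tt by (auto simp: F_iff J_iff)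
  then show "t \<in> C'"
  proof cases
    case 1 then show ?thesis using sub t tt by blast
  next
    case 2 then show ?thesis using copy_facts(2)[OF C'] tt by auto
  qed
qed

end



context cnf begin

lemma copy_surj:
  assumes X: "X \<in> PiE J (\<lambda>(i,j). copies (omega_exp (d i)))"
  shows "\<exists>C \<in> copies W. Theta C = X"
proof -
  have ex: "\<exists>g. strict_incr_on (omega_exp (d (fst k))) g \<and> X k = g ` omega_exp_carrier (d (fst k))"
    if "k \<in> J" for k
  proof -
    obtain i j where k: "k = (i,j)" by (cases k) auto
    have "X k \<in> copies (omega_exp (d i))" using X that k by (auto simp: PiE_iff)
    then show ?thesis unfolding copies_def OE_Field k by auto
  qed
  define G where "G = (\<lambda>k. SOME g. strict_incr_on (omega_exp (d (fst k))) g \<and> X k = g ` omega_exp_carrier (d (fst k)))"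
  have G: "\<And>k. k \<in> J \<Longrightarrow> strict_incr_on (omega_exp (d (fst k))) (G k) \<and> X k = G k ` omega_exp_carrier (d (fst k))"
    unfolding G_def by (rule someI_ex[OF ex])
  have G1: "\<And>i j w. (i,j) \<in> J \<Longrightarrow> w \<in> omega_exp_carrier (d i) \<Longrightarrow> G (i,j) w \<in> omega_exp_carrier (d i)"
    using G unfolding strict_incr_on_def OE_Field by fastforce
  have G2: "\<And>i j w w'. (i,j) \<in> J \<Longrightarrow> w \<in> omega_exp_carrier (d i) \<Longrightarrow> w' \<in> omega_exp_carrier (d i) \<Longrightarrow>
      omega_exp_less (d i) w w' \<Longrightarrow> omega_exp_less (d i) (G (i,j) w) (G (i,j) w')"
  proof -
    fix i j w w' assume a: "(i,j) \<in> J" "w \<in> omega_exp_carrier (d i)" "w' \<in> omega_exp_carrier (d i)"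
      "omega_exp_less (d i) w w'"
    have "(w,w') \<in> omega_exp (d i)" "w \<noteq> w'" using a by (auto simp: oe_pair)
    then have "(G (i,j) w, G (i,j) w') \<in> omega_exp (d i) \<and> G (i,j) w \<noteq> G (i,j) w'"
      using G[OF a(1)] a unfolding strict_incr_on_def OE_Field by auto
    then show "omega_exp_less (d i) (G (i,j) w) (G (i,j) w')" by (auto simp: oe_pair)
  qed
  define f where "f = (\<lambda>t::nat \<times> nat \<times> ('d \<Rightarrow> nat). if (fst t, fst (snd t)) \<in> J
     then (fst t, fst (snd t), G (fst t, fst (snd t)) (snd (snd t))) else t)"
  have fF: "\<And>t. t \<in> F \<Longrightarrow> f t \<in> F \<and> fst (f t) = fst t \<and> fst (snd (f t)) = fst (snd t)"
  proof -
    fix t assume t: "t \<in> F"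
    obtain i j w where tt: "t = (i,j,w)" by (cases t) auto
    show "f t \<in> F \<and> fst (f t) = fst t \<and> fst (snd (f t)) = fst (snd t)"
      using t G1[of i j w] unfolding tt f_def by (auto simp: F_iff J_iff)
  qed
  have si: "strict_incr_on W f"
    unfolding strict_incr_on_def FW
  proof (intro conjI ballI impI)
    fix t assume "t \<in> F" then show "f t \<in> F" using fF by auto
  next
    fix t t' assume tF: "t \<in> F" "t' \<in> F" and tt: "(t,t') \<in> W \<and> t \<noteq> t'"
    obtain i j w where t1: "t = (i,j,w)" by (cases t) auto
    obtain i' j' w' where t2: "t' = (i',j',w')" by (cases t') auto
    obtain a b c where f1: "f t = (a,b,c)" by (cases "f t") auto
    obtain a' b' c' where f2: "f t' = (a',b',c')" by (cases "f t'") auto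
    have k1: "a = i" "b = j" "a' = i'" "b' = j'" using fF tF t1 t2 f1 f2 by force+
    have ff: "(a,b,c) \<in> F" "(a',b',c') \<in> F" using fF tF f1 f2 by metis+
    have "(f t, f t') \<in> W \<and> f t \<noteq> f t'"
    proof (cases "(i,j) = (i',j')")
      case False
      then have "cnf_key_less (i,j) (i',j')" using W_key tt t1 t2 by blast
      then show ?thesis using key_lt[OF ff] k1 f1 f2 by auto
    next
      case True
      then have eq: "i' = i" "j' = j" by auto
      show ?thesis
      proof (cases "(i,j) \<in> J")
        case True
        have wl: "omega_exp_less (d i) w w'" using W_same[of i j w w'] tF tt t1 t2 eq by auto
        have wc: "w \<in> omega_exp_carrier (d i)" "w' \<in> omega_exp_carrier (d i)"
          using tF t1 t2 eq True by (auto simp: F_iff J_iff)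
        have "c = G (i,j) w" "c' = G (i,j) w'" using f1 f2 t1 t2 eq True unfolding f_def by auto
        then have "omega_exp_less (d i) c c'" using G2[OF True wc wl] by auto
        then show ?thesis using W_same[of i j c c'] ff k1 eq f1 f2 by auto
      next
        case False
        then have "w = (\<lambda>_. 0)" "w' = (\<lambda>_. 0)" using tF t1 t2 eq by (auto simp: F_iff J_iff)
        then show ?thesis using tt t1 t2 eq by auto
      qed
    qed
    then show "(f t, f t') \<in> W" "f t \<noteq> f t'" by auto
  qed
  define C where "C = f ` F"
  have CC: "C \<in> copies W" unfolding C_def copies_def FW using si by auto
  have "Theta C = X"
  proof (rule ext)
    fix k show "Theta C k = X k"
    proof (cases "k \<in> J")
      case False
      then have "X k = undefined" using X by (rule PiE_arb[rotated])
      then show ?thesis using False unfolding Theta_def by auto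
    next
      case True
      obtain i j where k: "k = (i,j)" by (cases k) auto
      have inF: "\<And>w. (i,j,w) \<in> F \<longleftrightarrow> w \<in> omega_exp_carrier (d i)" using True k by (auto simp: F_iff J_iff)
      have "{w. (i,j,w) \<in> C} = G (i,j) ` omega_exp_carrier (d i)"
      proof
        show "G (i, j) ` omega_exp_carrier (d i) \<subseteq> {w. (i,j,w) \<in> C}"
        proof
          fix w assume "w \<in> G (i, j) ` omega_exp_carrier (d i)"
          then obtain v where v: "v \<in> omega_exp_carrier (d i)" "w = G (i,j) v" by auto
          have "f (i,j,v) = (i,j,w)" using v True k unfolding f_def by auto
          then show "w \<in> {w. (i,j,w) \<in> C}" unfolding C_def using inF v by force
        qed
      next
        show "{w. (i,j,w) \<in> C} \<subseteq> G (i, j) ` omega_exp_carrier (d i)"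
        proof
          fix w assume "w \<in> {w. (i,j,w) \<in> C}"
          then obtain t where t: "t \<in> F" "f t = (i,j,w)" unfolding C_def by auto
          obtain a b c where tt: "t = (a,b,c)" by (cases t) auto
          have "a = i" "b = j" using fF[OF t(1)] t(2) tt by auto
          then have "c \<in> omega_exp_carrier (d i)" "w = G (i,j) c"
            using t tt inF True k unfolding f_def by auto
          then show "w \<in> G (i, j) ` omega_exp_carrier (d i)" by auto
        qed
      qed
      then show ?thesis using G[OF True] True k unfolding Theta_def by auto
    qed
  qed
  then show ?thesis using CC by auto
qed

lemma W_iso: "pre_iso (copies W) (\<subseteq>) (prod_carrier J (\<lambda>(i,j). copies (omega_exp (d i))))
    (prod_le J (\<lambda>_. (\<subseteq>)))"
proof -
  have ord: "\<And>C C'. C \<in> copies W \<Longrightarrow> C' \<in> copies W \<Longrightarrow> C \<subseteq> C' \<longleftrightarrow> prod_le J (\<lambda>_. (\<subseteq>)) (Theta C) (Theta C')"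
  proof
    fix C C' assume C: "C \<in> copies W" "C' \<in> copies W"
    show "C \<subseteq> C' \<Longrightarrow> prod_le J (\<lambda>_. (\<subseteq>)) (Theta C) (Theta C')"
      unfolding prod_le_def Theta_def by auto
    assume "prod_le J (\<lambda>_. (\<subseteq>)) (Theta C) (Theta C')"
    then have "\<forall>i j. (i,j) \<in> J \<longrightarrow> {w. (i,j,w) \<in> C} \<subseteq> {w. (i,j,w) \<in> C'}"
      unfolding prod_le_def Theta_def by fastforce
    then show "C \<subseteq> C'" by (rule copy_refl[OF C])
  qed
  have inj: "inj_on Theta (copies W)"
  proof (rule inj_onI)
    fix C C' assume C: "C \<in> copies W" "C' \<in> copies W" "Theta C = Theta C'"
    then show "C = C'" using ord[OF C(1,2)] ord[OF C(2,1)] unfolding prod_le_def by auto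
  qed
  have img: "Theta ` copies W = prod_carrier J (\<lambda>(i,j). copies (omega_exp (d i)))"
  proof
    show "Theta ` copies W \<subseteq> prod_carrier J (\<lambda>(i,j). copies (omega_exp (d i)))"
    proof
      fix X assume "X \<in> Theta ` copies W"
      then obtain C where C: "C \<in> copies W" "X = Theta C" by auto
      show "X \<in> prod_carrier J (\<lambda>(i,j). copies (omega_exp (d i)))"
        unfolding prod_carrier_def C(2) Theta_def using copy_facts(3)[OF C(1)] by auto
    qed
  next
    show "prod_carrier J (\<lambda>(i,j). copies (omega_exp (d i))) \<subseteq> Theta ` copies W"
      unfolding prod_carrier_def using copy_surj by force
  qed
  show ?thesis unfolding pre_iso_def bij_betw_def using inj img ord by blast
qed

end



lemma iso_strict:
  assumes h: "bij_betw h (Field r) (Field r')"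
    and o: "\<forall>a\<in>Field r. \<forall>b\<in>Field r. (a,b) \<in> r \<longleftrightarrow> (h a, h b) \<in> r'"
    and f: "strict_incr_on r f"
  shows "strict_incr_on r' (h \<circ> f \<circ> inv_into (Field r) h)"
    and "(h \<circ> f \<circ> inv_into (Field r) h) ` Field r' = h ` (f ` Field r)"
proof -
  let ?g = "inv_into (Field r) h"
  have g1: "\<And>y. y \<in> Field r' \<Longrightarrow> ?g y \<in> Field r" using h by (metis bij_betw_def inv_into_into)
  have g2: "\<And>y. y \<in> Field r' \<Longrightarrow> h (?g y) = y" using h by (metis bij_betw_def f_inv_into_f)
  have gimg: "?g ` Field r' = Field r" using h by (metis bij_betw_def bij_betw_inv_into bij_betw_imp_surj_on)
  have inj: "inj_on h (Field r)" using h by (auto simp: bij_betw_def)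
  have hF: "\<And>x. x \<in> Field r \<Longrightarrow> h x \<in> Field r'" using h by (auto simp: bij_betw_def)
  have f1: "\<And>x. x \<in> Field r \<Longrightarrow> f x \<in> Field r" using f unfolding strict_incr_on_def by auto
  have f2: "\<And>x y. x \<in> Field r \<Longrightarrow> y \<in> Field r \<Longrightarrow> (x,y) \<in> r \<Longrightarrow> x \<noteq> y \<Longrightarrow> (f x, f y) \<in> r \<and> f x \<noteq> f y"
    using f unfolding strict_incr_on_def by auto
  show "strict_incr_on r' (h \<circ> f \<circ> ?g)"
    unfolding strict_incr_on_def
  proof (intro conjI ballI impI)
    fix x assume "x \<in> Field r'" then show "(h \<circ> f \<circ> ?g) x \<in> Field r'" using g1 f1 hF by auto
  next
    fix x y assume xy: "x \<in> Field r'" "y \<in> Field r'" "(x, y) \<in> r' \<and> x \<noteq> y"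
    have gx: "?g x \<in> Field r" "?g y \<in> Field r" using g1 xy by auto
    have "(h (?g x), h (?g y)) \<in> r'" using g2 xy by simp
    then have "(?g x, ?g y) \<in> r" using o gx by blast
    moreover have "?g x \<noteq> ?g y" using g2 xy by metis
    ultimately have "(?g x, ?g y) \<in> r" "?g x \<noteq> ?g y" by auto
    then have "(f (?g x), f (?g y)) \<in> r \<and> f (?g x) \<noteq> f (?g y)" using f2 g1 xy by auto
    then show "((h \<circ> f \<circ> ?g) x, (h \<circ> f \<circ> ?g) y) \<in> r'" "(h \<circ> f \<circ> ?g) x \<noteq> (h \<circ> f \<circ> ?g) y"
      using o f1 g1 xy inj unfolding inj_on_def by auto
  qed
  have "h ` (f ` Field r) = h ` (f ` (?g ` Field r'))" using gimg by simp
  then show "(h \<circ> f \<circ> ?g) ` Field r' = h ` (f ` Field r)"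
    by (simp add: image_image)
qed

lemma copies_iso:
  assumes h: "bij_betw h (Field r) (Field r')"
    and o: "\<forall>a\<in>Field r. \<forall>b\<in>Field r. (a,b) \<in> r \<longleftrightarrow> (h a, h b) \<in> r'"
  shows "pre_iso (copies r) (\<subseteq>) (copies r') (\<subseteq>)"
proof -
  let ?g = "inv_into (Field r) h"
  have gb: "bij_betw ?g (Field r') (Field r)" by (rule bij_betw_inv_into[OF h])
  have g2: "\<And>y. y \<in> Field r' \<Longrightarrow> h (?g y) = y" using h by (metis bij_betw_def f_inv_into_f)
  have g1: "\<And>y. y \<in> Field r' \<Longrightarrow> ?g y \<in> Field r" using gb by (auto simp: bij_betw_def)
  have go: "\<forall>a\<in>Field r'. \<forall>b\<in>Field r'. (a,b) \<in> r' \<longleftrightarrow> (?g a, ?g b) \<in> r"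
  proof (intro ballI)
    fix a b assume ab: "a \<in> Field r'" "b \<in> Field r'"
    have "(?g a, ?g b) \<in> r \<longleftrightarrow> (h (?g a), h (?g b)) \<in> r'" using o g1 ab by blast
    then show "(a,b) \<in> r' \<longleftrightarrow> (?g a, ?g b) \<in> r" using g2 ab by simp
  qed
  have inj: "inj_on h (Field r)" using h by (auto simp: bij_betw_def)
  have sub: "\<And>C. C \<in> copies r \<Longrightarrow> C \<subseteq> Field r" unfolding copies_def strict_incr_on_def by auto
  have img: "(\<lambda>C. h ` C) ` copies r = copies r'"
  proof
    show "(\<lambda>C. h ` C) ` copies r \<subseteq> copies r'"
    proof
      fix D assume "D \<in> (\<lambda>C. h ` C) ` copies r"
      then obtain f where f: "strict_incr_on r f" "D = h ` (f ` Field r)" unfolding copies_def by auto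
      have D': "D = (h \<circ> f \<circ> ?g) ` Field r'" using iso_strict(2)[OF h o f(1)] f(2) by simp
      show "D \<in> copies r'" unfolding copies_def mem_Collect_eq
        by (rule exI[of _ "h \<circ> f \<circ> ?g"]) (use D' iso_strict(1)[OF h o f(1)] in simp)
    qed
  next
    show "copies r' \<subseteq> (\<lambda>C. h ` C) ` copies r"
    proof
      fix D assume "D \<in> copies r'"
      then obtain f where f: "strict_incr_on r' f" "D = f ` Field r'" unfolding copies_def by auto
      have a: "strict_incr_on r (?g \<circ> f \<circ> inv_into (Field r') ?g)"
        "(?g \<circ> f \<circ> inv_into (Field r') ?g) ` Field r = ?g ` (f ` Field r')"
        using iso_strict[OF gb go f(1)] by auto
      have "f ` Field r' \<subseteq> Field r'" using f(1) unfolding strict_incr_on_def by auto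
      moreover have "\<And>X. X \<subseteq> Field r' \<Longrightarrow> h ` (?g ` X) = X"
        unfolding image_image using g2 by (simp add: subset_iff cong: image_cong)
      ultimately have "h ` (?g ` (f ` Field r')) = D" using f(2) by simp
      then have "D = h ` ((?g \<circ> f \<circ> inv_into (Field r') ?g) ` Field r)" using a(2) by simp
      moreover have "(?g \<circ> f \<circ> inv_into (Field r') ?g) ` Field r \<in> copies r"
        unfolding copies_def mem_Collect_eq by (rule exI[of _ "?g \<circ> f \<circ> inv_into (Field r') ?g"]) (use a(1) in simp)
      ultimately show "D \<in> (\<lambda>C. h ` C) ` copies r" by blast
    qed
  qed
  have isub: "A \<subseteq> B" if t1: "A \<subseteq> Field r" and t2: "B \<subseteq> Field r" and t3: "h ` A \<subseteq> h ` B" for A B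
  proof
    fix x assume x: "x \<in> A"
    then obtain y where y: "y \<in> B" "h x = h y" using t3 by auto
    then have "x = y" using inj x t1 t2 unfolding inj_on_def by blast
    then show "x \<in> B" using y by simp
  qed
  have ord: "\<forall>C\<in>copies r. \<forall>C'\<in>copies r. C \<subseteq> C' \<longleftrightarrow> h ` C \<subseteq> h ` C'"
  proof (intro ballI iffI)
    fix C C' assume "C \<in> copies r" "C' \<in> copies r" "h ` C \<subseteq> h ` C'"
    then show "C \<subseteq> C'" using isub sub by simp
  qed (rule image_mono)
  have "inj_on (\<lambda>C. h ` C) (copies r)"
  proof (rule inj_onI)
    fix C C' assume "C \<in> copies r" "C' \<in> copies r" "h ` C = h ` C'"
    then show "C = C'" using isub[of C C'] isub[of C' C] sub by (simp add: subset_antisym)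
  qed
  then show ?thesis unfolding pre_iso_def bij_betw_def using img ord by blast
qed

lemma pre_iso_trans:
  assumes "pre_iso P a Q b" "pre_iso Q b R c" shows "pre_iso P a R c"
proof -
  obtain h where h: "bij_betw h P Q" "\<forall>x\<in>P. \<forall>y\<in>P. a x y \<longleftrightarrow> b (h x) (h y)" using assms(1) unfolding pre_iso_def by auto
  obtain g where g: "bij_betw g Q R" "\<forall>x\<in>Q. \<forall>y\<in>Q. b x y \<longleftrightarrow> c (g x) (g y)" using assms(2) unfolding pre_iso_def by auto
  have "bij_betw (g \<circ> h) P R" by (rule bij_betw_trans[OF h(1) g(1)])
  moreover have "\<forall>x\<in>P. \<forall>y\<in>P. a x y \<longleftrightarrow> c ((g \<circ> h) x) ((g \<circ> h) y)" using h g by (auto simp: bij_betw_def)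
  ultimately show ?thesis unfolding pre_iso_def by blast
qed

lemma sm_transfer:
  assumes h: "bij_betw h P Q" and o: "\<forall>x\<in>P. \<forall>y\<in>P. le x y \<longleftrightarrow> le' (h x) (h y)"
  shows "\<forall>x\<in>P. \<forall>y\<in>P. sm_le P le x y \<longleftrightarrow> sm_le Q le' (h x) (h y)"
proof -
  have Q: "Q = h ` P" using h by (auto simp: bij_betw_def)
  show ?thesis unfolding sm_le_def Q using o by blast
qed

lemma pre_iso_sm:
  assumes "pre_iso P le Q le'" shows "pre_iso P (sm_le P le) Q (sm_le Q le')"
  using assms sm_transfer unfolding pre_iso_def by blast

lemma pre_iso_sq:
  assumes "pre_iso P le Q le'" shows "pre_iso (sq_carrier P le) (sq_le P le) (sq_carrier Q le') (sq_le Q le')"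
proof -
  obtain h where h: "bij_betw h P Q" and o: "\<forall>x\<in>P. \<forall>y\<in>P. le x y \<longleftrightarrow> le' (h x) (h y)"
    using assms unfolding pre_iso_def by auto
  have so: "\<forall>x\<in>P. \<forall>y\<in>P. sm_le P le x y \<longleftrightarrow> sm_le Q le' (h x) (h y)" by (rule sm_transfer[OF h o])
  have Q: "Q = h ` P" using h by (auto simp: bij_betw_def)
  have inj: "inj_on h P" using h by (auto simp: bij_betw_def)
  have hP: "\<And>x. x \<in> P \<Longrightarrow> h x \<in> Q" using h by (auto simp: bij_betw_def)
  have cl: "h ` sq_class P le p = sq_class Q le' (h p)" if p: "p \<in> P" for p
  proof
    show "h ` sq_class P le p \<subseteq> sq_class Q le' (h p)"
      unfolding sq_class_def using so p hP by auto
  next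
    show "sq_class Q le' (h p) \<subseteq> h ` sq_class P le p"
    proof
      fix y assume y: "y \<in> sq_class Q le' (h p)"
      then obtain x where x: "x \<in> P" "y = h x" unfolding sq_class_def Q by auto
      then show "y \<in> h ` sq_class P le p" using y so p unfolding sq_class_def by auto
    qed
  qed
  have csub: "\<And>A. A \<in> sq_carrier P le \<Longrightarrow> A \<subseteq> P" unfolding sq_carrier_def sq_class_def by auto
  have img: "(\<lambda>A. h ` A) ` sq_carrier P le = sq_carrier Q le'"
  proof
    show "(\<lambda>A. h ` A) ` sq_carrier P le \<subseteq> sq_carrier Q le'"
      unfolding sq_carrier_def using cl hP by auto
  next
    show "sq_carrier Q le' \<subseteq> (\<lambda>A. h ` A) ` sq_carrier P le"
    proof
      fix B assume "B \<in> sq_carrier Q le'"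
      then obtain p where p: "p \<in> P" "B = sq_class Q le' (h p)" unfolding sq_carrier_def Q by auto
      then have "B = h ` sq_class P le p" using cl by auto
      then show "B \<in> (\<lambda>A. h ` A) ` sq_carrier P le" unfolding sq_carrier_def using p by auto
    qed
  qed
  have isub: "A \<subseteq> B" if t1: "A \<subseteq> P" and t2: "B \<subseteq> P" and t3: "h ` A \<subseteq> h ` B" for A B
  proof
    fix x assume x: "x \<in> A"
    then obtain y where y: "y \<in> B" "h x = h y" using t3 by auto
    then have "x = y" using inj x t1 t2 unfolding inj_on_def by blast
    then show "x \<in> B" using y by simp
  qed
  have injA: "inj_on (\<lambda>A. h ` A) (sq_carrier P le)"
  proof (rule inj_onI)
    fix C C' assume "C \<in> sq_carrier P le" "C' \<in> sq_carrier P le" "h ` C = h ` C'"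
    then show "C = C'" using isub[of C C'] isub[of C' C] csub by (simp add: subset_antisym)
  qed
  have ordA: "\<forall>A\<in>sq_carrier P le. \<forall>B\<in>sq_carrier P le. sq_le P le A B \<longleftrightarrow> sq_le Q le' (h ` A) (h ` B)"
  proof (intro ballI)
    fix A B assume AB: "A \<in> sq_carrier P le" "B \<in> sq_carrier P le"
    have "A \<subseteq> P" "B \<subseteq> P" using csub AB by auto
    then show "sq_le P le A B \<longleftrightarrow> sq_le Q le' (h ` A) (h ` B)"
      unfolding sq_le_def using so by (auto simp: subset_iff)
  qed
  show ?thesis unfolding pre_iso_def bij_betw_def using img injA ordA by blast
qed




lemma sm_refl: "p \<in> P \<Longrightarrow> (\<forall>x\<in>P. le x x) \<Longrightarrow> sm_le P le p p"
  unfolding sm_le_def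
proof (intro ballI impI)
  fix r assume "\<forall>x\<in>P. le x x" "r \<in> P" "le r p"
  then show "\<exists>s\<in>P. le s r \<and> le s p" by (intro bexI[of _ r]) auto
qed

lemma sm_trans:
  assumes tr: "\<forall>x\<in>P. \<forall>y\<in>P. \<forall>z\<in>P. le x y \<longrightarrow> le y z \<longrightarrow> le x z"
    and "p \<in> P" "q \<in> P" "t \<in> P" "sm_le P le p q" "sm_le P le q t"
  shows "sm_le P le p t"
  unfolding sm_le_def
proof (intro ballI impI)
  fix r assume r: "r \<in> P" "le r p"
  then obtain s where s: "s \<in> P" "le s r" "le s q" using assms(5) unfolding sm_le_def by auto
  then obtain s' where s': "s' \<in> P" "le s' s" "le s' t" using assms(6) unfolding sm_le_def by auto
  have "le s' s \<longrightarrow> le s r \<longrightarrow> le s' r" using tr s'(1) s(1) r(1) by blast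
  then have "le s' r" using s s' by blast
  then show "\<exists>s\<in>P. le s r \<and> le s t" using s' by blast
qed

locale preo =
  fixes P :: "'a set" and le :: "'a \<Rightarrow> 'a \<Rightarrow> bool"
  assumes rf: "\<forall>x\<in>P. le x x"
    and tr: "\<forall>x\<in>P. \<forall>y\<in>P. \<forall>z\<in>P. le x y \<longrightarrow> le y z \<longrightarrow> le x z"
begin

lemma smr: "p \<in> P \<Longrightarrow> sm_le P le p p" using sm_refl[of p P le] rf by simp
lemma smt: "p \<in> P \<Longrightarrow> q \<in> P \<Longrightarrow> t \<in> P \<Longrightarrow> sm_le P le p q \<Longrightarrow> sm_le P le q t \<Longrightarrow> sm_le P le p t"
  by (rule sm_trans[OF tr])

lemma cls_mem: "p \<in> P \<Longrightarrow> p \<in> sq_class P le p"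
  unfolding sq_class_def using smr by auto

lemma cls_eq: "p \<in> P \<Longrightarrow> q \<in> P \<Longrightarrow> sq_class P le p = sq_class P le q \<longleftrightarrow> sm_le P le p q \<and> sm_le P le q p"
proof
  assume pq: "p \<in> P" "q \<in> P" "sq_class P le p = sq_class P le q"
  then have "q \<in> sq_class P le p" using cls_mem by auto
  then show "sm_le P le p q \<and> sm_le P le q p" unfolding sq_class_def by auto
next
  assume pq: "p \<in> P" "q \<in> P" "sm_le P le p q \<and> sm_le P le q p"
  show "sq_class P le p = sq_class P le q"
  proof (intro set_eqI iffI)
    fix x assume "x \<in> sq_class P le p"
    then have x: "x \<in> P" "sm_le P le p x" "sm_le P le x p" unfolding sq_class_def by auto
    have "sm_le P le q x" by (rule smt[OF pq(2) pq(1) x(1)]) (use pq x in auto)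
    moreover have "sm_le P le x q" by (rule smt[OF x(1) pq(1) pq(2)]) (use pq x in auto)
    ultimately show "x \<in> sq_class P le q" unfolding sq_class_def using x by auto
  next
    fix x assume "x \<in> sq_class P le q"
    then have x: "x \<in> P" "sm_le P le q x" "sm_le P le x q" unfolding sq_class_def by auto
    have "sm_le P le p x" by (rule smt[OF pq(1) pq(2) x(1)]) (use pq x in auto)
    moreover have "sm_le P le x p" by (rule smt[OF x(1) pq(2) pq(1)]) (use pq x in auto)
    ultimately show "x \<in> sq_class P le p" unfolding sq_class_def using x by auto
  qed
qed

lemma cls_le: "p \<in> P \<Longrightarrow> q \<in> P \<Longrightarrow> sq_le P le (sq_class P le p) (sq_class P le q) \<longleftrightarrow> sm_le P le p q"
proof
  assume pq: "p \<in> P" "q \<in> P" "sq_le P le (sq_class P le p) (sq_class P le q)"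
  then obtain p' q' where a: "p' \<in> sq_class P le p" "q' \<in> sq_class P le q" "sm_le P le p' q'"
    unfolding sq_le_def by auto
  then have b: "p' \<in> P" "q' \<in> P" "sm_le P le p p'" "sm_le P le q' q" unfolding sq_class_def by auto
  show "sm_le P le p q" using smt[OF pq(1) b(1) pq(2) b(3) smt[OF b(1,2) pq(2) a(3) b(4)]] .
next
  assume pq: "p \<in> P" "q \<in> P" "sm_le P le p q"
  then show "sq_le P le (sq_class P le p) (sq_class P le q)" unfolding sq_le_def
    using cls_mem[OF pq(1)] cls_mem[OF pq(2)] pq(3) by blast
qed

end

lemma preo_sub: "preo P (\<subseteq>)" unfolding preo_def by auto

lemma preo_prod: "preo (PiE J P) (prod_le J (\<lambda>_. (\<subseteq>)))"
  unfolding preo_def prod_le_def by (meson order_refl order_trans)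

lemma sm_prod:
  assumes p: "p \<in> PiE J P" and q: "q \<in> PiE J P"
  shows "sm_le (PiE J P) (prod_le J (\<lambda>_. (\<subseteq>))) p q \<longleftrightarrow> prod_le J (\<lambda>k. sm_le (P k) (\<subseteq>)) p q"
proof
  assume a: "sm_le (PiE J P) (prod_le J (\<lambda>_. (\<subseteq>))) p q"
  show "prod_le J (\<lambda>k. sm_le (P k) (\<subseteq>)) p q"
    unfolding prod_le_def sm_le_def
  proof (intro ballI impI)
    fix k r assume k: "k \<in> J" and r: "r \<in> P k" "r \<subseteq> p k"
    define r' where "r' = p(k := r)"
    have r'P: "r' \<in> PiE J P" unfolding r'_def using p r k by (auto simp: PiE_iff extensional_def)
    have "prod_le J (\<lambda>_. (\<subseteq>)) r' p" unfolding prod_le_def r'_def using r by auto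
    then obtain t where t: "t \<in> PiE J P" "prod_le J (\<lambda>_. (\<subseteq>)) t r'" "prod_le J (\<lambda>_. (\<subseteq>)) t q"
      using a r'P unfolding sm_le_def by blast
    then have "t k \<subseteq> r" "t k \<subseteq> q k" "t k \<in> P k" using k unfolding prod_le_def r'_def
      by (auto simp: PiE_iff dest!: bspec[of _ _ k])
    then show "\<exists>s\<in>P k. s \<subseteq> r \<and> s \<subseteq> q k" by blast
  qed
next
  assume a: "prod_le J (\<lambda>k. sm_le (P k) (\<subseteq>)) p q"
  show "sm_le (PiE J P) (prod_le J (\<lambda>_. (\<subseteq>))) p q"
    unfolding sm_le_def
  proof (intro ballI impI)
    fix r assume r: "r \<in> PiE J P" "prod_le J (\<lambda>_. (\<subseteq>)) r p"
    have ex: "\<exists>t\<in>P k. t \<subseteq> r k \<and> t \<subseteq> q k" if k: "k \<in> J" for k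
      using a r k unfolding prod_le_def sm_le_def by (auto simp: PiE_iff)
    define t where "t = (\<lambda>k\<in>J. SOME t. t \<in> P k \<and> t \<subseteq> r k \<and> t \<subseteq> q k)"
    have tk: "\<And>k. k \<in> J \<Longrightarrow> t k \<in> P k \<and> t k \<subseteq> r k \<and> t k \<subseteq> q k"
    proof -
      fix k assume k: "k \<in> J"
      have "(SOME t. t \<in> P k \<and> t \<subseteq> r k \<and> t \<subseteq> q k) \<in> P k \<and> (SOME t. t \<in> P k \<and> t \<subseteq> r k \<and> t \<subseteq> q k) \<subseteq> r k \<and> (SOME t. t \<in> P k \<and> t \<subseteq> r k \<and> t \<subseteq> q k) \<subseteq> q k"
        using someI_ex[OF ex[OF k, unfolded Bex_def]] by blast
      then show "t k \<in> P k \<and> t k \<subseteq> r k \<and> t k \<subseteq> q k" unfolding t_def using k by simp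
    qed
    have "t \<in> PiE J P" using tk unfolding t_def by (auto simp: PiE_iff)
    then show "\<exists>s\<in>PiE J P. prod_le J (\<lambda>_. (\<subseteq>)) s r \<and> prod_le J (\<lambda>_. (\<subseteq>)) s q"
      using tk unfolding prod_le_def by blast
  qed
qed

lemma pre_iso_sm_prod:
  "pre_iso (PiE J P) (sm_le (PiE J P) (prod_le J (\<lambda>_. (\<subseteq>)))) (PiE J P) (prod_le J (\<lambda>k. sm_le (P k) (\<subseteq>)))"
  unfolding pre_iso_def using sm_prod by (intro exI[of _ id]) auto


lemma pre_iso_sq_prod:
  "pre_iso (sq_carrier (PiE J P) (prod_le J (\<lambda>_. (\<subseteq>)))) (sq_le (PiE J P) (prod_le J (\<lambda>_. (\<subseteq>))))
     (PiE J (\<lambda>k. sq_carrier (P k) (\<subseteq>))) (prod_le J (\<lambda>k. sq_le (P k) (\<subseteq>)))"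
proof -
  interpret A: preo "PiE J P" "prod_le J (\<lambda>_. (\<subseteq>))" by (rule preo_prod)
  define cl where "cl = sq_class (PiE J P) (prod_le J (\<lambda>_. (\<subseteq>)))"
  define clk where "clk = (\<lambda>k. sq_class (P k) (\<subseteq>))"
  define Psi where "Psi = (\<lambda>A. (\<lambda>k\<in>J. clk k ((SOME p. p \<in> A) k)))"
  have eqk: "\<And>k x y. x \<in> P k \<Longrightarrow> y \<in> P k \<Longrightarrow> clk k x = clk k y \<longleftrightarrow> sm_le (P k) (\<subseteq>) x y \<and> sm_le (P k) (\<subseteq>) y x"
    unfolding clk_def by (rule preo.cls_eq[OF preo_sub])
  have lek: "\<And>k x y. x \<in> P k \<Longrightarrow> y \<in> P k \<Longrightarrow> sq_le (P k) (\<subseteq>) (clk k x) (clk k y) \<longleftrightarrow> sm_le (P k) (\<subseteq>) x y"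
    unfolding clk_def by (rule preo.cls_le[OF preo_sub])
  have PiEk: "\<And>p k. p \<in> PiE J P \<Longrightarrow> k \<in> J \<Longrightarrow> p k \<in> P k" by (auto simp: PiE_iff)
  have psi: "Psi (cl p) = (\<lambda>k\<in>J. clk k (p k))" if p: "p \<in> PiE J P" for p
  proof -
    define rep where "rep = (SOME p'. p' \<in> cl p)"
    have "rep \<in> cl p" unfolding rep_def using A.cls_mem[OF p] cl_def by (metis someI_ex)
    then have rep: "rep \<in> PiE J P" "sm_le (PiE J P) (prod_le J (\<lambda>_. (\<subseteq>))) p rep"
       "sm_le (PiE J P) (prod_le J (\<lambda>_. (\<subseteq>))) rep p" unfolding cl_def sq_class_def by auto
    have a: "prod_le J (\<lambda>k. sm_le (P k) (\<subseteq>)) p rep" using sm_prod[OF p rep(1)] rep(2) by simp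
    have b: "prod_le J (\<lambda>k. sm_le (P k) (\<subseteq>)) rep p" using sm_prod[OF rep(1) p] rep(3) by simp
    have "clk k (rep k) = clk k (p k)" if k: "k \<in> J" for k
      using eqk[OF PiEk[OF rep(1) k] PiEk[OF p k]] a b k unfolding prod_le_def by simp
    then show ?thesis unfolding Psi_def rep_def by (intro restrict_ext) simp
  qed
  have cls_eq': "\<And>p q. p \<in> PiE J P \<Longrightarrow> q \<in> PiE J P \<Longrightarrow> cl p = cl q \<longleftrightarrow> (\<forall>k\<in>J. clk k (p k) = clk k (q k))"
  proof -
    fix p q assume pq: "p \<in> PiE J P" "q \<in> PiE J P"
    have "cl p = cl q \<longleftrightarrow> prod_le J (\<lambda>k. sm_le (P k) (\<subseteq>)) p q \<and> prod_le J (\<lambda>k. sm_le (P k) (\<subseteq>)) q p"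
      unfolding cl_def using A.cls_eq[OF pq] sm_prod[OF pq] sm_prod[OF pq(2,1)] by simp
    also have "\<dots> \<longleftrightarrow> (\<forall>k\<in>J. clk k (p k) = clk k (q k))"
    proof -
      have "\<And>k. k \<in> J \<Longrightarrow> clk k (p k) = clk k (q k) \<longleftrightarrow> sm_le (P k) (\<subseteq>) (p k) (q k) \<and> sm_le (P k) (\<subseteq>) (q k) (p k)"
        using eqk PiEk pq by blast
      then show ?thesis unfolding prod_le_def by auto
    qed
    finally show "cl p = cl q \<longleftrightarrow> (\<forall>k\<in>J. clk k (p k) = clk k (q k))" .
  qed
  have car: "sq_carrier (PiE J P) (prod_le J (\<lambda>_. (\<subseteq>))) = cl ` PiE J P" unfolding sq_carrier_def cl_def ..
  have inj: "inj_on Psi (cl ` PiE J P)"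
  proof (rule inj_onI)
    fix A B assume "A \<in> cl ` PiE J P" "B \<in> cl ` PiE J P" and e: "Psi A = Psi B"
    then obtain p q where pq: "p \<in> PiE J P" "q \<in> PiE J P" "A = cl p" "B = cl q" by auto
    have "\<forall>k\<in>J. clk k (p k) = clk k (q k)"
    proof
      fix k assume k: "k \<in> J"
      have "Psi (cl p) k = Psi (cl q) k" using e pq by simp
      then show "clk k (p k) = clk k (q k)" using k unfolding psi[OF pq(1)] psi[OF pq(2)] by simp
    qed
    then show "A = B" using cls_eq' pq by blast
  qed
  have img: "Psi ` (cl ` PiE J P) = PiE J (\<lambda>k. sq_carrier (P k) (\<subseteq>))"
  proof
    show "Psi ` (cl ` PiE J P) \<subseteq> PiE J (\<lambda>k. sq_carrier (P k) (\<subseteq>))"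
    proof
      fix Y assume "Y \<in> Psi ` (cl ` PiE J P)"
      then obtain p where p: "p \<in> PiE J P" "Y = Psi (cl p)" by auto
      then show "Y \<in> PiE J (\<lambda>k. sq_carrier (P k) (\<subseteq>))"
        using psi[OF p(1)] PiEk[OF p(1)] unfolding sq_carrier_def clk_def by auto
    qed
  next
    show "PiE J (\<lambda>k. sq_carrier (P k) (\<subseteq>)) \<subseteq> Psi ` (cl ` PiE J P)"
    proof
      fix Y assume Y: "Y \<in> PiE J (\<lambda>k. sq_carrier (P k) (\<subseteq>))"
      have ex: "\<exists>x. x \<in> P k \<and> Y k = clk k x" if "k \<in> J" for k
        using Y that unfolding sq_carrier_def clk_def by (auto simp: PiE_iff)
      define p where "p = (\<lambda>k\<in>J. SOME x. x \<in> P k \<and> Y k = clk k x)"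
      have pk: "\<And>k. k \<in> J \<Longrightarrow> p k \<in> P k \<and> Y k = clk k (p k)"
      proof -
        fix k assume k: "k \<in> J"
        show "p k \<in> P k \<and> Y k = clk k (p k)" unfolding p_def using someI_ex[OF ex[OF k]] k by simp
      qed
      have pP: "p \<in> PiE J P" using pk unfolding p_def by (auto simp: PiE_iff)
      have "Psi (cl p) = Y"
      proof (rule ext)
        fix k show "Psi (cl p) k = Y k"
        proof (cases "k \<in> J")
          case True then show ?thesis using psi[OF pP] pk by simp
        next
          case False then show ?thesis using psi[OF pP] PiE_arb[OF Y False] by simp
        qed
      qed
      then show "Y \<in> Psi ` (cl ` PiE J P)" using pP by blast
    qed
  qed
  have ord: "\<forall>A\<in>cl ` PiE J P. \<forall>B\<in>cl ` PiE J P. sq_le (PiE J P) (prod_le J (\<lambda>_. (\<subseteq>))) A B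
      \<longleftrightarrow> prod_le J (\<lambda>k. sq_le (P k) (\<subseteq>)) (Psi A) (Psi B)"
  proof (intro ballI)
    fix A B assume "A \<in> cl ` PiE J P" "B \<in> cl ` PiE J P"
    then obtain p q where pq: "p \<in> PiE J P" "q \<in> PiE J P" "A = cl p" "B = cl q" by auto
    have "sq_le (PiE J P) (prod_le J (\<lambda>_. (\<subseteq>))) A B \<longleftrightarrow> prod_le J (\<lambda>k. sm_le (P k) (\<subseteq>)) p q"
      unfolding pq(3,4) cl_def using A.cls_le[OF pq(1,2)] sm_prod[OF pq(1,2)] by simp
    also have "\<dots> \<longleftrightarrow> prod_le J (\<lambda>k. sq_le (P k) (\<subseteq>)) (Psi A) (Psi B)"
    proof -
      have "\<And>k. k \<in> J \<Longrightarrow> sq_le (P k) (\<subseteq>) (clk k (p k)) (clk k (q k)) \<longleftrightarrow> sm_le (P k) (\<subseteq>) (p k) (q k)"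
        using lek PiEk pq by blast
      then show ?thesis unfolding pq(3,4) psi[OF pq(1)] psi[OF pq(2)] prod_le_def by simp
    qed
    finally show "sq_le (PiE J P) (prod_le J (\<lambda>_. (\<subseteq>))) A B
      \<longleftrightarrow> prod_le J (\<lambda>k. sq_le (P k) (\<subseteq>)) (Psi A) (Psi B)" .
  qed
  show ?thesis unfolding pre_iso_def bij_betw_def car using inj img ord by blast
qed


theorem mainTheorem2:
  fixes r :: "'a rel" and d :: "nat \<Rightarrow> 'd rel" and s :: "nat \<Rightarrow> nat" and n m :: nat
  assumes r_wo: "Well_order r"
    and d_wo: "\<And>i. 1 \<le> i \<Longrightarrow> i \<le> n \<Longrightarrow> Well_order (d i)"
    and n_pos: "1 \<le> n"
    and s_pos: "\<And>i. 1 \<le> i \<Longrightarrow> i \<le> n \<Longrightarrow> 1 \<le> s i"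
    and d1_pos: "Field (d 1) \<noteq> {}"
    and d_incr: "\<And>i. 1 \<le> i \<Longrightarrow> i < n \<Longrightarrow> (d i, d (Suc i)) \<in> ordLess"
    and r_cnf: "(r, cnf_ord d s n m) \<in> ordIso"
  shows "pre_iso (copies r) (\<subseteq>)
           (prod_carrier (cnf_index s n) (\<lambda>(i, j). copies (omega_exp (d i))))
           (prod_le (cnf_index s n) (\<lambda>_. (\<subseteq>)))
       \<and> pre_iso (copies r) (sm_le (copies r) (\<subseteq>))
           (prod_carrier (cnf_index s n) (\<lambda>(i, j). copies (omega_exp (d i))))
           (prod_le (cnf_index s n) (\<lambda>(i, j). sm_le (copies (omega_exp (d i))) (\<subseteq>)))
       \<and> pre_iso (sq_carrier (copies r) (\<subseteq>)) (sq_le (copies r) (\<subseteq>))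
           (prod_carrier (cnf_index s n) (\<lambda>(i, j). sq_carrier (copies (omega_exp (d i))) (\<subseteq>)))
           (prod_le (cnf_index s n) (\<lambda>(i, j). sq_le (copies (omega_exp (d i))) (\<subseteq>)))"
proof -
  have Wwo: "Well_order (cnf_ord d s n m)" and ex: "\<exists>h. iso r (cnf_ord d s n m) h"
    using r_cnf unfolding ordIso_def by auto
  then obtain h where h: "iso r (cnf_ord d s n m) h" by auto
  interpret cnf d s n m using d_wo s_pos d_incr Wwo by unfold_locales auto
  have iso1: "pre_iso (copies r) (\<subseteq>) (copies (cnf_ord d s n m)) (\<subseteq>)"
    using h unfolding iso_iff2 by (intro copies_iso) auto
  define P where "P = (\<lambda>(i::nat, j::nat). copies (omega_exp (d i)))"
  have iso12: "pre_iso (copies r) (\<subseteq>) (PiE (cnf_index s n) P) (prod_le (cnf_index s n) (\<lambda>_. (\<subseteq>)))"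
    using pre_iso_trans[OF iso1 W_iso] unfolding P_def prod_carrier_def .
  have e1: "(\<lambda>k. sm_le (P k) (\<subseteq>)) = (\<lambda>(i, j). sm_le (copies (omega_exp (d i))) (\<subseteq>))"
    unfolding P_def by (rule ext) (simp split: prod.split)
  have e2: "(\<lambda>k. sq_le (P k) (\<subseteq>)) = (\<lambda>(i, j). sq_le (copies (omega_exp (d i))) (\<subseteq>))"
    unfolding P_def by (rule ext) (simp split: prod.split)
  have e3: "(\<lambda>k. sq_carrier (P k) (\<subseteq>)) = (\<lambda>(i, j). sq_carrier (copies (omega_exp (d i))) (\<subseteq>))"
    unfolding P_def by (rule ext) (simp split: prod.split)
  have c2: "pre_iso (copies r) (sm_le (copies r) (\<subseteq>)) (PiE (cnf_index s n) P) (prod_le (cnf_index s n) (\<lambda>k. sm_le (P k) (\<subseteq>)))"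
    by (rule pre_iso_trans[OF pre_iso_sm[OF iso12] pre_iso_sm_prod])
  have c3: "pre_iso (sq_carrier (copies r) (\<subseteq>)) (sq_le (copies r) (\<subseteq>))
      (PiE (cnf_index s n) (\<lambda>k. sq_carrier (P k) (\<subseteq>))) (prod_le (cnf_index s n) (\<lambda>k. sq_le (P k) (\<subseteq>)))"
    by (rule pre_iso_trans[OF pre_iso_sq[OF iso12] pre_iso_sq_prod])
  note c2' = c2[unfolded e1] and c3' = c3[unfolded e2 e3]
  show ?thesis using iso12 c2' c3' unfolding prod_carrier_def P_def by simp
qed

end
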